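(* Let a nondegenerate triangle be circumscribed about a central conic one of whose foci coincides with the circumcenter of the triangle. Then the triangle is acute if and only if the conic is an ellipse, and it is obtuse if and only if the conic is a hyperbola.
   Context: A central conic is a non-degenerate ellipse or hyperbola. A triangle is circumscribed about a conic if each of its three sidelines is tangent to the conic. *)

theory Defs
  imports "HOL-Analysis.Analysis"
begin

text \<open>A central conic in the plane, given in canonical form with respect to
  a centre c and an orthonormal frame (u, v), with semi-axes a, b > 0.
  If ell is True it is the ellipse  x^2/a^2 + y^2/b^2 = 1,
  otherwise the hyperbola  x^2/a^2 - y^2/b^2 = 1,
  where x = (P - c) . u and y = (P - c) . v.\<close>

definition central_conic :: "bool \<Rightarrow> real^2 \<Rightarrow> real^2 \<Rightarrow> real^2 \<Rightarrow> real \<Rightarrow> real \<Rightarrow> bool" where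
  "central_conic ell c u v a b \<longleftrightarrow>
     norm u = 1 \<and> norm v = 1 \<and> inner u v = 0 \<and> a > 0 \<and> b > 0"

definition conic_form :: "bool \<Rightarrow> real^2 \<Rightarrow> real^2 \<Rightarrow> real^2 \<Rightarrow> real \<Rightarrow> real \<Rightarrow> real^2 \<Rightarrow> real" where
  "conic_form ell c u v a b P =
     (inner (P - c) u)^2 / a^2 + (if ell then 1 else -1) * (inner (P - c) v)^2 / b^2"

definition conic_points :: "bool \<Rightarrow> real^2 \<Rightarrow> real^2 \<Rightarrow> real^2 \<Rightarrow> real \<Rightarrow> real \<Rightarrow> (real^2) set" where
  "conic_points ell c u v a b = {P. conic_form ell c u v a b P = 1}"

definition conic_grad :: "bool \<Rightarrow> real^2 \<Rightarrow> real^2 \<Rightarrow> real^2 \<Rightarrow> real \<Rightarrow> real \<Rightarrow> real^2 \<Rightarrow> real^2" where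
  "conic_grad ell c u v a b P =
     (2 * inner (P - c) u / a^2) *\<^sub>R u
     + ((if ell then 1 else -1) * 2 * inner (P - c) v / b^2) *\<^sub>R v"

definition conic_foci :: "bool \<Rightarrow> real^2 \<Rightarrow> real^2 \<Rightarrow> real^2 \<Rightarrow> real \<Rightarrow> real \<Rightarrow> (real^2) set" where
  "conic_foci ell c u v a b =
     (if ell then
        (if b \<le> a then {c + sqrt (a^2 - b^2) *\<^sub>R u, c - sqrt (a^2 - b^2) *\<^sub>R u}
         else {c + sqrt (b^2 - a^2) *\<^sub>R v, c - sqrt (b^2 - a^2) *\<^sub>R v})
      else {c + sqrt (a^2 + b^2) *\<^sub>R u, c - sqrt (a^2 + b^2) *\<^sub>R u})"

definition tangent_line :: "bool \<Rightarrow> real^2 \<Rightarrow> real^2 \<Rightarrow> real^2 \<Rightarrow> real \<Rightarrow> real \<Rightarrow> real^2 \<Rightarrow> real^2 \<Rightarrow> bool" where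
  "tangent_line ell c u v a b P Q \<longleftrightarrow>
     (\<exists>X. (\<exists>t::real. X = P + t *\<^sub>R (Q - P)) \<and> X \<in> conic_points ell c u v a b \<and>
          inner (conic_grad ell c u v a b X) (Q - P) = 0)"

definition circumscribed :: "real^2 \<Rightarrow> real^2 \<Rightarrow> real^2 \<Rightarrow> bool \<Rightarrow> real^2 \<Rightarrow> real^2 \<Rightarrow> real^2 \<Rightarrow> real \<Rightarrow> real \<Rightarrow> bool" where
  "circumscribed A B C ell c u v a b \<longleftrightarrow>
     tangent_line ell c u v a b A B \<and> tangent_line ell c u v a b B C \<and> tangent_line ell c u v a b C A"

definition is_circumcenter :: "real^2 \<Rightarrow> real^2 \<Rightarrow> real^2 \<Rightarrow> real^2 \<Rightarrow> bool" where
  "is_circumcenter Z A B C \<longleftrightarrow> dist Z A = dist Z B \<and> dist Z B = dist Z C"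

definition tri_angle :: "real^2 \<Rightarrow> real^2 \<Rightarrow> real^2 \<Rightarrow> real" where
  "tri_angle A B C = arccos (inner (A - B) (C - B) / (norm (A - B) * norm (C - B)))"

definition acute_triangle :: "real^2 \<Rightarrow> real^2 \<Rightarrow> real^2 \<Rightarrow> bool" where
  "acute_triangle A B C \<longleftrightarrow>
     tri_angle B A C < pi/2 \<and> tri_angle A B C < pi/2 \<and> tri_angle A C B < pi/2"

definition obtuse_triangle :: "real^2 \<Rightarrow> real^2 \<Rightarrow> real^2 \<Rightarrow> bool" where
  "obtuse_triangle A B C \<longleftrightarrow>
     tri_angle B A C > pi/2 \<or> tri_angle A B C > pi/2 \<or> tri_angle A C B > pi/2"

end

theory Submission
  imports Defs
begin

definition Phi :: "real^2 \<Rightarrow> real^2 \<Rightarrow> real^2 \<Rightarrow> real" where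
  "Phi d x y = inner d d * inner x y - inner d x * inner d y"

definition kap :: "bool \<Rightarrow> real \<Rightarrow> real \<Rightarrow> real" where
  "kap ell a b = (if ell then (if b \<le> a then b^2 else a^2) else -(b^2))"

lemma Phi_shift: "Phi d (x + t *\<^sub>R d) (y + t *\<^sub>R d) = Phi d x y"
  by (simp add: Phi_def inner_add_right inner_add_left inner_commute algebra_simps)

lemma r1: fixes u1 u2 v1 v2 :: real
  assumes "u1^2+u2^2=1" "v1^2+v2^2=1" "u1 * v1+u2 * v2=0"
  shows "u1^2+v1^2 = 1 \<and> u2^2+v2^2=1 \<and> u1 * u2+v1 * v2=0"
proof -
  have D: "(u1 * v2-u2 * v1)^2 = 1" using assms by algebra
  have "v1 = -(u1 * v2-u2 * v1)*u2 \<and> v2 = (u1 * v2-u2 * v1)*u1" using assms by algebra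
  then show ?thesis using D assms by algebra
qed

lemma inner2: "inner (x::real^2) y = x$1 * y$1 + x$2 * y$2"
  by (simp add: inner_vec_def sum_2)

lemma frame_inner:
  fixes u v w z :: "real^2"
  assumes "norm u = 1" "norm v = 1" "inner u v = 0"
  shows "inner w z = inner w u * inner z u + inner w v * inner z v"
proof -
  have "inner u u = 1" "inner v v = 1" using assms(1,2) by (simp_all add: norm_eq_1)
  hence "(u$1)^2+(u$2)^2=1" "(v$1)^2+(v$2)^2=1" "u$1 * v$1+u$2 * v$2=0"
    using assms(3) by (simp_all add: inner2 power2_eq_square)
  from r1[OF this] have h: "(u$1)^2+(v$1)^2 = 1" "(u$2)^2+(v$2)^2=1" "u$1 * u$2+v$1 * v$2=0" by auto
  show ?thesis unfolding inner2 using h by algebra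
qed

lemma perp_param:
  fixes g1 g2 d1 d2 :: real
  assumes "g1*d1 + g2*d2 = 0" "g1^2+g2^2 \<noteq> 0"
  obtains m where "d1 = -m*g2" "d2 = m*g1"
proof -
  define m where "m = (g1*d2 - g2*d1)/(g1^2+g2^2)"
  have "d1 * (g1^2+g2^2) = -(g1*d2 - g2*d1)*g2" "d2 * (g1^2+g2^2) = (g1*d2 - g2*d1)*g1"
    using assms(1) by algebra+
  hence "d1 = -m*g2" "d2 = m*g1" unfolding m_def using assms(2) by (simp_all add: field_simps)
  thus ?thesis using that by blast
qed

lemma real_e1: fixes d1 d2 x0 y0 a b f1 f2 :: real
  assumes "a > 0" "b > 0" "x0^2/a^2 + y0^2/b^2 = 1" "2*x0/a^2*d1 + 2*y0/b^2*d2 = 0"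
    "f1^2 = a^2 - b^2" "f2 = 0"
  shows "(d1^2+d2^2)*((f1-x0)*(-f1-x0) + (f2-y0)*(-f2-y0)) - (d1*(f1-x0)+d2*(f2-y0))*(d1*(-f1-x0)+d2*(-f2-y0)) = b^2*(d1^2+d2^2)"
proof -
  have h1: "x0^2 * b^2 + y0^2 * a^2 = a^2 * b^2" using assms(1-3) by (simp add: field_simps)
  have h2: "x0 * d1 * b^2 + y0 * d2 * a^2 = 0" using assms(1,2,4) by (simp add: field_simps)
  have g: "(x0*b^2)^2 + (y0*a^2)^2 \<noteq> 0"
  proof
    assume "(x0*b^2)^2 + (y0*a^2)^2 = 0"
    hence "x0 = 0" "y0 = 0" using assms(1,2) by (auto simp: add_nonneg_eq_0_iff)
    thus False using h1 assms(1,2) by simp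
  qed
  obtain m where m: "d1 = -m*(y0*a^2)" "d2 = m*(x0*b^2)"
    using perp_param[of "x0*b^2" d1 "y0*a^2" d2] h2 g by (auto simp: algebra_simps)
  show ?thesis using h1 assms(5) unfolding assms(6) m by algebra
qed

lemma real_e2: fixes d1 d2 x0 y0 a b f1 f2 :: real
  assumes "a > 0" "b > 0" "x0^2/a^2 + y0^2/b^2 = 1" "2*x0/a^2*d1 + 2*y0/b^2*d2 = 0"
    "f2^2 = b^2 - a^2" "f1 = 0"
  shows "(d1^2+d2^2)*((f1-x0)*(-f1-x0) + (f2-y0)*(-f2-y0)) - (d1*(f1-x0)+d2*(f2-y0))*(d1*(-f1-x0)+d2*(-f2-y0)) = a^2*(d1^2+d2^2)"
proof -
  have h1: "x0^2 * b^2 + y0^2 * a^2 = a^2 * b^2" using assms(1-3) by (simp add: field_simps)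
  have h2: "x0 * d1 * b^2 + y0 * d2 * a^2 = 0" using assms(1,2,4) by (simp add: field_simps)
  have g: "(x0*b^2)^2 + (y0*a^2)^2 \<noteq> 0"
  proof
    assume "(x0*b^2)^2 + (y0*a^2)^2 = 0"
    hence "x0 = 0" "y0 = 0" using assms(1,2) by (auto simp: add_nonneg_eq_0_iff)
    thus False using h1 assms(1,2) by simp
  qed
  obtain m where m: "d1 = -m*(y0*a^2)" "d2 = m*(x0*b^2)"
    using perp_param[of "x0*b^2" d1 "y0*a^2" d2] h2 g by (auto simp: algebra_simps)
  show ?thesis using h1 assms(5) unfolding assms(6) m by algebra
qed

lemma real_h: fixes d1 d2 x0 y0 a b f1 f2 :: real
  assumes "a > 0" "b > 0" "x0^2/a^2 + -1 * y0^2/b^2 = 1" "2*x0/a^2*d1 + -1*2*y0/b^2*d2 = 0"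
    "f1^2 = a^2 + b^2" "f2 = 0"
  shows "(d1^2+d2^2)*((f1-x0)*(-f1-x0) + (f2-y0)*(-f2-y0)) - (d1*(f1-x0)+d2*(f2-y0))*(d1*(-f1-x0)+d2*(-f2-y0)) = -(b^2)*(d1^2+d2^2)"
proof -
  have h1: "x0^2 * b^2 - y0^2 * a^2 = a^2 * b^2" using assms(1-3) by (simp add: field_simps)
  have h2: "x0 * d1 * b^2 - y0 * d2 * a^2 = 0" using assms(1,2,4) by (simp add: field_simps)
  have g: "(x0*b^2)^2 + (-(y0*a^2))^2 \<noteq> 0"
  proof
    assume "(x0*b^2)^2 + (-(y0*a^2))^2 = 0"
    hence "x0 = 0" "y0 = 0" using assms(1,2) by (auto simp: add_nonneg_eq_0_iff)
    thus False using h1 assms(1,2) by simp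
  qed
  obtain m where m: "d1 = -m*(-(y0*a^2))" "d2 = m*(x0*b^2)"
    using perp_param[of "x0*b^2" d1 "-(y0*a^2)" d2] h2 g by (auto simp: algebra_simps)
  show ?thesis using h1 assms(5) unfolding assms(6) m by algebra
qed

lemma core:
  assumes cc: "central_conic ell c u v a b" and tl: "tangent_line ell c u v a b P Q"
    and fo: "F \<in> conic_foci ell c u v a b"
  shows "Phi (Q - P) (F - P) (2 *\<^sub>R c - F - P) = kap ell a b * inner (Q - P) (Q - P)"
proof -
  from cc have nu: "norm u = 1" and nv: "norm v = 1" and uv: "inner u v = 0" and ab: "a > 0" "b > 0"
    unfolding central_conic_def by auto
  have uu: "inner u u = 1" and vv: "inner v v = 1" using nu nv by (simp_all add: norm_eq_1)
  have vu: "inner v u = 0" using uv by (simp add: inner_commute)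
  note fr = frame_inner[OF nu nv uv]
  from tl obtain X t where X: "X = P + t *\<^sub>R (Q - P)" and on: "conic_form ell c u v a b X = 1"
    and gr: "inner (conic_grad ell c u v a b X) (Q - P) = 0"
    unfolding tangent_line_def conic_points_def by auto
  define d where "d = Q - P"
  have e1: "F - P = (F - X) + t *\<^sub>R d" "2 *\<^sub>R c - F - P = (2 *\<^sub>R c - F - X) + t *\<^sub>R d"
    unfolding X d_def by (simp_all add: algebra_simps scaleR_diff_right)
  have "Phi d (F - P) (2 *\<^sub>R c - F - P) = Phi d (F - X) (2 *\<^sub>R c - F - X)"
    unfolding e1 by (rule Phi_shift)
  define x0 where "x0 = inner (X - c) u"
  define y0 where "y0 = inner (X - c) v"
  define d1 where "d1 = inner d u"
  define d2 where "d2 = inner d v"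
  define f1 where "f1 = inner (F - c) u"
  define f2 where "f2 = inner (F - c) v"
  have s1: "F - X = (F - c) - (X - c)" "2 *\<^sub>R c - F - X = - (F - c) - (X - c)"
    by (simp_all add: algebra_simps scaleR_2)
  have P1: "Phi d (F - X) (2 *\<^sub>R c - F - X) =
    (d1^2+d2^2)*((f1-x0)*(-f1-x0) + (f2-y0)*(-f2-y0)) - (d1*(f1-x0)+d2*(f2-y0))*(d1*(-f1-x0)+d2*(-f2-y0))"
  proof -
    have i: "inner (F - X) u = f1 - x0" "inner (F - X) v = f2 - y0"
      "inner (2 *\<^sub>R c - F - X) u = -f1 - x0" "inner (2 *\<^sub>R c - F - X) v = -f2 - y0"
      unfolding x0_def y0_def f1_def f2_def by (simp_all add: inner_diff_left inner_scaleR_left)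
    show ?thesis unfolding Phi_def
      apply (subst (1 2 3 4) fr)
      unfolding i d1_def[symmetric] d2_def[symmetric] by (simp add: power2_eq_square)
  qed
  have dd: "inner d d = d1^2+d2^2" unfolding d1_def d2_def by (subst fr) (simp add: power2_eq_square)
  have cf: "x0^2/a^2 + (if ell then 1 else -1) * y0^2/b^2 = 1"
    using on unfolding conic_form_def x0_def y0_def .
  have gf: "2*x0/a^2*d1 + (if ell then 1 else -1)*2*y0/b^2*d2 = 0"
  proof -
    have "inner u d = d1" "inner v d = d2" unfolding d1_def d2_def by (simp_all add: inner_commute)
    hence "inner (conic_grad ell c u v a b X) d = 2*x0/a^2*d1 + (if ell then 1 else -1)*2*y0/b^2*d2"
      unfolding conic_grad_def x0_def[symmetric] y0_def[symmetric] by (simp add: inner_add_left)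
    thus ?thesis using gr d_def by simp
  qed
  have main: "(d1^2+d2^2)*((f1-x0)*(-f1-x0) + (f2-y0)*(-f2-y0)) - (d1*(f1-x0)+d2*(f2-y0))*(d1*(-f1-x0)+d2*(-f2-y0)) = kap ell a b * (d1^2+d2^2)"
  proof (cases ell)
    case True
    show ?thesis
    proof (cases "b \<le> a")
      case le: True
      have "F = c + sqrt (a^2 - b^2) *\<^sub>R u \<or> F = c - sqrt (a^2 - b^2) *\<^sub>R u"
        using fo True le unfolding conic_foci_def by auto
      moreover have "a^2 - b^2 \<ge> 0" using le ab by (simp add: power_mono)
      ultimately have "f1^2 = a^2 - b^2" "f2 = 0" unfolding f1_def f2_def
        by (auto simp: inner_add_left inner_diff_left uu uv)
      thus ?thesis using real_e1[OF ab] cf gf True le by (simp add: kap_def)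
    next
      case gt: False
      have "F = c + sqrt (b^2 - a^2) *\<^sub>R v \<or> F = c - sqrt (b^2 - a^2) *\<^sub>R v"
        using fo True gt unfolding conic_foci_def by auto
      moreover have "b^2 - a^2 \<ge> 0" using gt ab by (simp add: power_mono)
      ultimately have "f2^2 = b^2 - a^2" "f1 = 0" unfolding f1_def f2_def
        by (auto simp: inner_add_left inner_diff_left vv vu)
      thus ?thesis using real_e2[OF ab] cf gf True gt by (simp add: kap_def)
    qed
  next
    case False
    have "F = c + sqrt (a^2 + b^2) *\<^sub>R u \<or> F = c - sqrt (a^2 + b^2) *\<^sub>R u"
      using fo False unfolding conic_foci_def by auto
    moreover have "a^2 + b^2 \<ge> 0" by simp
    ultimately have "f1^2 = a^2 + b^2" "f2 = 0" unfolding f1_def f2_def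
      by (auto simp: inner_add_left inner_diff_left uu uv)
    thus ?thesis using real_h[OF ab] cf gf False by (simp add: kap_def)
  qed
  show ?thesis
    using \<open>Phi d (F - P) _ = _\<close> P1 dd main unfolding d_def by simp
qed


lemma eq0: "x = y \<Longrightarrow> x - y = (0::real)" by simp

lemma tri_real:
  fixes a1 a2 b1 b2 c1 c2 z1 z2 k r :: real
  assumes ca: "a1^2+a2^2=r" and cb: "b1^2+b2^2=r" and cc: "c1^2+c2^2=r"
    and det: "(b1-a1)*(c2-a2) - (b2-a2)*(c1-a1) \<noteq> 0"
    and pAB: "((b1-a1)^2+(b2-a2)^2)*((-a1)*(2*z1-a1)+(-a2)*(2*z2-a2)) - ((b1-a1)*(-a1)+(b2-a2)*(-a2))*((b1-a1)*(2*z1-a1)+(b2-a2)*(2*z2-a2)) = k*((b1-a1)^2+(b2-a2)^2)"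
    and pBC: "((c1-b1)^2+(c2-b2)^2)*((-b1)*(2*z1-b1)+(-b2)*(2*z2-b2)) - ((c1-b1)*(-b1)+(c2-b2)*(-b2))*((c1-b1)*(2*z1-b1)+(c2-b2)*(2*z2-b2)) = k*((c1-b1)^2+(c2-b2)^2)"
    and pCA: "((a1-c1)^2+(a2-c2)^2)*((-c1)*(2*z1-c1)+(-c2)*(2*z2-c2)) - ((a1-c1)*(-c1)+(a2-c2)*(-c2))*((a1-c1)*(2*z1-c1)+(a2-c2)*(2*z2-c2)) = k*((a1-c1)^2+(a2-c2)^2)"
  shows "2*k = -(r + (a1*b1+a2*b2) + (b1*c1+b2*c2) + (c1*a1+c2*a2))"
proof -
  have nAB: "(b1-a1)^2+(b2-a2)^2 \<noteq> 0"
  proof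
    assume "(b1-a1)^2+(b2-a2)^2 = 0"
    hence "b1-a1 = 0" "b2-a2=0" by (auto simp: add_nonneg_eq_0_iff)
    thus False using det by simp
  qed
  have nBC: "(c1-b1)^2+(c2-b2)^2 \<noteq> 0"
  proof
    assume "(c1-b1)^2+(c2-b2)^2 = 0"
    hence "c1-b1 = 0" "c2-b2=0" by (auto simp: add_nonneg_eq_0_iff)
    thus False using det by (simp add: algebra_simps)
  qed
  have nCA: "(a1-c1)^2+(a2-c2)^2 \<noteq> 0"
  proof
    assume "(a1-c1)^2+(a2-c2)^2 = 0"
    hence "a1-c1 = 0" "a2-c2=0" by (auto simp: add_nonneg_eq_0_iff)
    thus False using det by (simp add: algebra_simps)
  qed
  have "4 * (((b1-a1)^2+(b2-a2)^2)*((-a1)*(2*z1-a1)+(-a2)*(2*z2-a2)) - ((b1-a1)*(-a1)+(b2-a2)*(-a2))*((b1-a1)*(2*z1-a1)+(b2-a2)*(2*z2-a2))) = ((b1-a1)^2+(b2-a2)^2) * ((a1+b1)^2+(a2+b2)^2 - 4*(a1+b1)*z1 - 4*(a2+b2)*z2)"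
    using eq0[OF ca] eq0[OF cb] by algebra
  hence "((b1-a1)^2+(b2-a2)^2) * (4*k) = ((b1-a1)^2+(b2-a2)^2) * ((a1+b1)^2+(a2+b2)^2 - 4*(a1+b1)*z1 - 4*(a2+b2)*z2)" unfolding pAB by (simp only: ac_simps)
  hence mAB: "4*k = (a1+b1)^2+(a2+b2)^2 - 4*(a1+b1)*z1 - 4*(a2+b2)*z2" using mult_left_cancel[OF nAB] by blast
  have "4 * (((c1-b1)^2+(c2-b2)^2)*((-b1)*(2*z1-b1)+(-b2)*(2*z2-b2)) - ((c1-b1)*(-b1)+(c2-b2)*(-b2))*((c1-b1)*(2*z1-b1)+(c2-b2)*(2*z2-b2))) = ((c1-b1)^2+(c2-b2)^2) * ((b1+c1)^2+(b2+c2)^2 - 4*(b1+c1)*z1 - 4*(b2+c2)*z2)"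
    using eq0[OF cb] eq0[OF cc] by algebra
  hence "((c1-b1)^2+(c2-b2)^2) * (4*k) = ((c1-b1)^2+(c2-b2)^2) * ((b1+c1)^2+(b2+c2)^2 - 4*(b1+c1)*z1 - 4*(b2+c2)*z2)" unfolding pBC by (simp only: ac_simps)
  hence mBC: "4*k = (b1+c1)^2+(b2+c2)^2 - 4*(b1+c1)*z1 - 4*(b2+c2)*z2" using mult_left_cancel[OF nBC] by blast
  have "4 * (((a1-c1)^2+(a2-c2)^2)*((-c1)*(2*z1-c1)+(-c2)*(2*z2-c2)) - ((a1-c1)*(-c1)+(a2-c2)*(-c2))*((a1-c1)*(2*z1-c1)+(a2-c2)*(2*z2-c2))) = ((a1-c1)^2+(a2-c2)^2) * ((c1+a1)^2+(c2+a2)^2 - 4*(c1+a1)*z1 - 4*(c2+a2)*z2)"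
    using eq0[OF cc] eq0[OF ca] by algebra
  hence "((a1-c1)^2+(a2-c2)^2) * (4*k) = ((a1-c1)^2+(a2-c2)^2) * ((c1+a1)^2+(c2+a2)^2 - 4*(c1+a1)*z1 - 4*(c2+a2)*z2)" unfolding pCA by (simp only: ac_simps)
  hence mCA: "4*k = (c1+a1)^2+(c2+a2)^2 - 4*(c1+a1)*z1 - 4*(c2+a2)*z2" using mult_left_cancel[OF nCA] by blast
  define w1 where "w1 = z1 - (a1+b1+c1)/2"
  define w2 where "w2 = z2 - (a2+b2+c2)/2"
  have e1: "(b1-a1)*w1 + (b2-a2)*w2 = 0" unfolding w1_def w2_def using eq0[OF mBC] eq0[OF mCA] eq0[OF ca] eq0[OF cb] by algebra
  have e2: "(c1-a1)*w1 + (c2-a2)*w2 = 0" unfolding w1_def w2_def using eq0[OF mBC] eq0[OF mAB] eq0[OF ca] eq0[OF cc] by algebra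
  have "((b1-a1)*(c2-a2) - (b2-a2)*(c1-a1)) * w1 = 0" using eq0[OF e1] eq0[OF e2] by algebra
  hence "w1 = 0" using det by simp
  have "((b1-a1)*(c2-a2) - (b2-a2)*(c1-a1)) * w2 = 0" using eq0[OF e1] eq0[OF e2] by algebra
  hence "w2 = 0" using det by simp
  have z: "z1 = (a1+b1+c1)/2" "z2 = (a2+b2+c2)/2" using \<open>w1 = 0\<close> \<open>w2 = 0\<close> w1_def w2_def by simp_all
  show ?thesis using eq0[OF mAB] eq0[OF ca] eq0[OF cb] eq0[OF cc] eq0[OF z(1)] eq0[OF z(2)] by algebra
qed

lemma sign_real:
  fixes a1 a2 b1 b2 c1 c2 k r :: real
  assumes ca: "a1^2+a2^2=r" and cb: "b1^2+b2^2=r" and cc: "c1^2+c2^2=r"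
    and det: "(b1-a1)*(c2-a2) - (b2-a2)*(c1-a1) \<noteq> 0"
    and kk: "2*k = -(r + (a1*b1+a2*b2) + (b1*c1+b2*c2) + (c1*a1+c2*a2))"
  defines "pA \<equiv> (b1-a1)*(c1-a1)+(b2-a2)*(c2-a2)"
    and "pB \<equiv> (a1-b1)*(c1-b1)+(a2-b2)*(c2-b2)"
    and "pC \<equiv> (a1-c1)*(b1-c1)+(a2-c2)*(b2-c2)"
  shows "(k > 0 \<longrightarrow> pA > 0 \<and> pB > 0 \<and> pC > 0) \<and> (k < 0 \<longrightarrow> pA < 0 \<or> pB < 0 \<or> pC < 0)"
proof -
  define al where "al = b1*c1+b2*c2"
  define be where "be = c1*a1+c2*a2"
  define ga where "ga = a1*b1+a2*b2"
  have G: "r^3 + 2*al*be*ga - r*(al^2+be^2+ga^2) = 0"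
  proof -
    have "(a1^2+a2^2)*(b1^2+b2^2)*(c1^2+c2^2) + 2*(b1*c1+b2*c2)*(c1*a1+c2*a2)*(a1*b1+a2*b2) - (a1^2+a2^2)*(b1*c1+b2*c2)^2 - (b1^2+b2^2)*(c1*a1+c2*a2)^2-(c1^2+c2^2)*(a1*b1+a2*b2)^2 = 0"
      by algebra
    then show ?thesis using ca cb cc unfolding al_def be_def ga_def by (simp add: power3_eq_cube algebra_simps)
  qed
  have I: "(r + al + be + ga) * ((2*r-2*ga)*(2*r-2*al)*(2*r-2*be)) = -4*r*((r+al-be-ga)*(r+be-al-ga)*(r+ga-al-be))"
    using eq0[OF G] by algebra
  have A1: "pA = r+al-be-ga"
    unfolding pA_def al_def be_def ga_def using eq0[OF ca] eq0[OF cb] eq0[OF cc] by algebra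
  have A2: "pB = r+be-al-ga"
    unfolding pB_def al_def be_def ga_def using eq0[OF ca] eq0[OF cb] eq0[OF cc] by algebra
  have A3: "pC = r+ga-al-be"
    unfolding pC_def al_def be_def ga_def using eq0[OF ca] eq0[OF cb] eq0[OF cc] by algebra
  note A = A1 A2 A3
  have N1: "2*r-2*ga = (a1-b1)^2+(a2-b2)^2"
    unfolding ga_def using eq0[OF ca] eq0[OF cb] by algebra
  have N2: "2*r-2*al = (b1-c1)^2+(b2-c2)^2"
    unfolding al_def using eq0[OF cc] eq0[OF cb] by algebra
  have N3: "2*r-2*be = (c1-a1)^2+(c2-a2)^2"
    unfolding be_def using eq0[OF ca] eq0[OF cc] by algebra
  note N = N1 N2 N3
  have pos: "(a1-b1)^2+(a2-b2)^2 > 0" "(b1-c1)^2+(b2-c2)^2 > 0" "(c1-a1)^2+(c2-a2)^2 > 0"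
  proof -
    have "a1 \<noteq> b1 \<or> a2 \<noteq> b2" using det by auto
    thus "(a1-b1)^2+(a2-b2)^2 > 0" by (auto simp: add_pos_nonneg add_nonneg_pos)
    have "c1 \<noteq> b1 \<or> c2 \<noteq> b2" using det by (auto simp: algebra_simps)
    thus "(b1-c1)^2+(b2-c2)^2 > 0" by (auto simp: add_pos_nonneg add_nonneg_pos)
    have "c1 \<noteq> a1 \<or> c2 \<noteq> a2" using det by (auto simp: algebra_simps)
    thus "(c1-a1)^2+(c2-a2)^2 > 0" by (auto simp: add_pos_nonneg add_nonneg_pos)
  qed
  have Npos: "(2*r-2*ga)*(2*r-2*al)*(2*r-2*be) > 0" unfolding N using pos by simp
  have rpos: "r > 0"
  proof -
    have "r \<ge> 0" using ca by (metis add_nonneg_nonneg zero_le_power2)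
    moreover have "r \<noteq> 0"
    proof
      assume "r = 0"
      hence "a1 = 0" "a2 = 0" "b1 = 0" "b2 = 0" using ca cb by (auto simp: add_nonneg_eq_0_iff)
      thus False using det by simp
    qed
    ultimately show ?thesis by simp
  qed
  have K: "r + al + be + ga = -2*k" using kk unfolding al_def be_def ga_def by simp
  have key: "k * ((2*r-2*ga)*(2*r-2*al)*(2*r-2*be)) = 2*r*(pA*pB*pC)"
    using eq0[OF I] eq0[OF K] eq0[OF A1] eq0[OF A2] eq0[OF A3] by algebra
  have s1: "pA + pB > 0" "pB + pC > 0" "pA + pC > 0"
    using pos unfolding A N[symmetric] by simp_all
  have P31: "pA*pB*pC = pA*(pB*pC)" by (simp add: mult_ac)
  have P32: "pA*pB*pC = pB*(pA*pC)" by (simp add: mult_ac)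
  have P33: "pA*pB*pC = pC*(pA*pB)" by (simp add: mult_ac)
  note P3 = P31 P32 P33
  show ?thesis
  proof (rule conjI; rule impI)
    assume "k > 0"
    hence "k * ((2*r-2*ga)*(2*r-2*al)*(2*r-2*be)) > 0" using Npos by simp
    hence "2*r*(pA*pB*pC) > 0" using key by simp
    hence P: "pA*pB*pC > 0" using rpos by (simp add: zero_less_mult_iff)
    have "pA > 0"
    proof (rule ccontr)
      assume "\<not> pA > 0"
      hence "pB > 0" "pC > 0" using s1 by linarith+
      hence "pA*(pB*pC) \<le> 0" using \<open>\<not> pA > 0\<close> by (simp add: mult_nonpos_nonneg)
      thus False using P by (simp add: mult_ac)
    qed
    moreover have "pB > 0"
    proof (rule ccontr)
      assume "\<not> pB > 0"
      hence "pA > 0" "pC > 0" using s1 by linarith+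
      hence "pB*(pA*pC) \<le> 0" using \<open>\<not> pB > 0\<close> by (simp add: mult_nonpos_nonneg)
      thus False using P by (simp add: mult_ac)
    qed
    moreover have "pC > 0"
    proof (rule ccontr)
      assume "\<not> pC > 0"
      hence "pA > 0" "pB > 0" using s1 by linarith+
      hence "pC*(pA*pB) \<le> 0" using \<open>\<not> pC > 0\<close> by (simp add: mult_nonpos_nonneg)
      thus False using P by (simp add: mult_ac)
    qed
    ultimately show "pA > 0 \<and> pB > 0 \<and> pC > 0" by simp
  next
    assume "k < 0"
    hence "k * ((2*r-2*ga)*(2*r-2*al)*(2*r-2*be)) < 0" using Npos by (simp add: mult_neg_pos)
    hence "2*r*(pA*pB*pC) < 0" using key by simp
    hence P: "pA*pB*pC < 0" using rpos by (simp add: mult_less_0_iff)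
    show "pA < 0 \<or> pB < 0 \<or> pC < 0"
    proof (rule ccontr)
      assume "\<not> (pA < 0 \<or> pB < 0 \<or> pC < 0)"
      hence "pA \<ge> 0" "pB \<ge> 0" "pC \<ge> 0" by auto
      hence "pA*pB*pC \<ge> 0" by simp
      thus False using P by simp
    qed
  qed
qed


lemma Phi_comp: "Phi d x y = ((d$1)^2+(d$2)^2)*(x$1*y$1+x$2*y$2) - (d$1*x$1+d$2*x$2)*(d$1*y$1+d$2*y$2)"
  by (simp add: Phi_def inner2 power2_eq_square)

lemma det0_collinear:
  fixes p q :: "real^2"
  assumes "p$1*q$2 - p$2*q$1 = 0"
  shows "collinear {0, p, q}"
proof -
  have "p = 0 \<or> q = 0 \<or> (\<exists>c. q = c *\<^sub>R p)"
  proof (cases "p$1 = 0")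
    case False
    have "q = (q$1/p$1) *\<^sub>R p"
      using False assms by (simp add: vec_eq_iff forall_2 field_simps)
    thus ?thesis by blast
  next
    case True
    show ?thesis
    proof (cases "p$2 = 0")
      case False
      have "q = (q$2/p$2) *\<^sub>R p"
        using False True assms by (simp add: vec_eq_iff forall_2 field_simps)
      thus ?thesis by blast
    next
      case False2: True
      have "p = 0" using True False2 by (simp add: vec_eq_iff forall_2)
      thus ?thesis by blast
    qed
  qed
  thus ?thesis by (simp add: collinear_lemma)
qed

lemma noncoll_det:
  fixes A B C :: "real^2"
  assumes "\<not> collinear {A, B, C}"
  shows "(B-A)$1*(C-A)$2 - (B-A)$2*(C-A)$1 \<noteq> 0"
proof
  assume h: "(B-A)$1*(C-A)$2 - (B-A)$2*(C-A)$1 = 0"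
  have "collinear {0, B - A, C - A}" by (rule det0_collinear[OF h])
  hence "collinear {B, A, C}" using collinear_3[of B A C] by simp
  moreover have "{B, A, C} = {A, B, C}" by (rule insert_commute)
  ultimately have "collinear {A, B, C}" by simp
  thus False using assms by simp
qed

lemma angle_sign:
  fixes x y :: "real^2"
  assumes "x \<noteq> 0" "y \<noteq> 0"
  shows "(arccos (inner x y / (norm x * norm y)) < pi/2 \<longleftrightarrow> inner x y > 0) \<and>
         (arccos (inner x y / (norm x * norm y)) > pi/2 \<longleftrightarrow> inner x y < 0)"
proof -
  define q where "q = inner x y / (norm x * norm y)"
  have np: "norm x * norm y > 0" using assms by simp
  have cs: "\<bar>inner x y\<bar> \<le> norm x * norm y" by (rule Cauchy_Schwarz_ineq2)
  have "\<bar>q\<bar> = \<bar>inner x y\<bar> / (norm x * norm y)" unfolding q_def using np by (simp add: abs_divide)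
  also have "\<dots> \<le> 1" using cs np by (simp add: divide_le_eq)
  finally have q1: "\<bar>q\<bar> \<le> 1" .
  have z: "\<bar>0::real\<bar> \<le> 1" by simp
  have f1: "arccos q < pi/2 \<longleftrightarrow> 0 < q" using arccos_less_mono[OF q1 z] by (simp only: arccos_0)
  have f2: "arccos q > pi/2 \<longleftrightarrow> q < 0" using arccos_less_mono[OF z q1] by (simp only: arccos_0)
  have f3: "0 < q \<longleftrightarrow> inner x y > 0" unfolding q_def using np by (simp add: zero_less_divide_iff)
  have f4: "q < 0 \<longleftrightarrow> inner x y < 0" unfolding q_def using np by (simp add: divide_less_0_iff)
  show ?thesis unfolding q_def[symmetric] using f1 f2 f3 f4 by blast
qed

theorem corollary2p2:
  fixes A B C c u v F :: "real^2" and a b :: real and ell :: bool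
  assumes "\<not> collinear {A, B, C}"
    and "central_conic ell c u v a b"
    and "circumscribed A B C ell c u v a b"
    and "F \<in> conic_foci ell c u v a b"
    and "is_circumcenter F A B C"
  shows "(acute_triangle A B C \<longleftrightarrow> ell) \<and> (obtuse_triangle A B C \<longleftrightarrow> \<not> ell)"
proof -
  note nc = assms(1) and cc = assms(2) and fo = assms(4)
  from assms(3) have tAB: "tangent_line ell c u v a b A B" and tBC: "tangent_line ell c u v a b B C"
    and tCA: "tangent_line ell c u v a b C A" unfolding circumscribed_def by auto
  define k where "k = kap ell a b"
  define a' where "a' = A - F"
  define b' where "b' = B - F"
  define c' where "c' = C - F"
  define z where "z = c - F"
  have V: "B - A = b' - a'" "C - B = c' - b'" "A - C = a' - c'" "C - A = c' - a'" "A - B = a' - b'" "B - C = b' - c'"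
    "F - A = - a'" "F - B = - b'" "F - C = - c'"
    "2 *\<^sub>R c - F - A = 2 *\<^sub>R z - a'" "2 *\<^sub>R c - F - B = 2 *\<^sub>R z - b'" "2 *\<^sub>R c - F - C = 2 *\<^sub>R z - c'"
    unfolding a'_def b'_def c'_def z_def by (simp_all add: algebra_simps scaleR_2)
  have hAB: "Phi (b' - a') (- a') (2 *\<^sub>R z - a') = k * inner (b' - a') (b' - a')"
    using core[OF cc tAB fo] unfolding V k_def .
  have hBC: "Phi (c' - b') (- b') (2 *\<^sub>R z - b') = k * inner (c' - b') (c' - b')"
    using core[OF cc tBC fo] unfolding V k_def .
  have hCA: "Phi (a' - c') (- c') (2 *\<^sub>R z - c') = k * inner (a' - c') (a' - c')"
    using core[OF cc tCA fo] unfolding V k_def .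
  define r where "r = (a'$1)^2 + (a'$2)^2"
  have ca: "(a'$1)^2 + (a'$2)^2 = r" unfolding r_def ..
  have "dist F A = dist F B" "dist F B = dist F C" using assms(5) unfolding is_circumcenter_def by auto
  hence "norm a' = norm b'" "norm b' = norm c'" unfolding dist_norm V by (simp_all add: norm_minus_cancel)
  hence "inner a' a' = inner b' b'" "inner b' b' = inner c' c'" by (simp_all add: power2_norm_eq_inner[symmetric])
  hence cb: "(b'$1)^2 + (b'$2)^2 = r" and ccc: "(c'$1)^2 + (c'$2)^2 = r"
    unfolding r_def inner2 by (simp_all add: power2_eq_square)
  have det: "(b'$1 - a'$1)*(c'$2 - a'$2) - (b'$2 - a'$2)*(c'$1 - a'$1) \<noteq> 0"
    using noncoll_det[OF nc] unfolding V by simp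
  have pAB: "((b'$1-a'$1)^2+(b'$2-a'$2)^2)*((-a'$1)*(2*z$1-a'$1)+(-a'$2)*(2*z$2-a'$2)) - ((b'$1-a'$1)*(-a'$1)+(b'$2-a'$2)*(-a'$2))*((b'$1-a'$1)*(2*z$1-a'$1)+(b'$2-a'$2)*(2*z$2-a'$2)) = k*((b'$1-a'$1)^2+(b'$2-a'$2)^2)"
    using hAB unfolding Phi_comp inner2 by (simp add: power2_eq_square)
  have pBC: "((c'$1-b'$1)^2+(c'$2-b'$2)^2)*((-b'$1)*(2*z$1-b'$1)+(-b'$2)*(2*z$2-b'$2)) - ((c'$1-b'$1)*(-b'$1)+(c'$2-b'$2)*(-b'$2))*((c'$1-b'$1)*(2*z$1-b'$1)+(c'$2-b'$2)*(2*z$2-b'$2)) = k*((c'$1-b'$1)^2+(c'$2-b'$2)^2)"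
    using hBC unfolding Phi_comp inner2 by (simp add: power2_eq_square)
  have pCA: "((a'$1-c'$1)^2+(a'$2-c'$2)^2)*((-c'$1)*(2*z$1-c'$1)+(-c'$2)*(2*z$2-c'$2)) - ((a'$1-c'$1)*(-c'$1)+(a'$2-c'$2)*(-c'$2))*((a'$1-c'$1)*(2*z$1-c'$1)+(a'$2-c'$2)*(2*z$2-c'$2)) = k*((a'$1-c'$1)^2+(a'$2-c'$2)^2)"
    using hCA unfolding Phi_comp inner2 by (simp add: power2_eq_square)
  have kk: "2*k = -(r + (a'$1*b'$1+a'$2*b'$2) + (b'$1*c'$1+b'$2*c'$2) + (c'$1*a'$1+c'$2*a'$2))"
    by (rule tri_real[OF ca cb ccc det pAB pBC pCA])
  have S: "(k > 0 \<longrightarrow> inner (B-A) (C-A) > 0 \<and> inner (A-B) (C-B) > 0 \<and> inner (A-C) (B-C) > 0) \<and>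
           (k < 0 \<longrightarrow> inner (B-A) (C-A) < 0 \<or> inner (A-B) (C-B) < 0 \<or> inner (A-C) (B-C) < 0)"
    using sign_real[OF ca cb ccc det kk] unfolding V inner2 by simp
  have nz: "B - A \<noteq> 0" "C - A \<noteq> 0" "A - B \<noteq> 0" "C - B \<noteq> 0" "A - C \<noteq> 0" "B - C \<noteq> 0"
    using nc by (auto simp: insert_commute)
  have angA: "(tri_angle B A C < pi/2 \<longleftrightarrow> inner (B-A) (C-A) > 0) \<and> (tri_angle B A C > pi/2 \<longleftrightarrow> inner (B-A) (C-A) < 0)"
    unfolding tri_angle_def by (rule angle_sign[OF nz(1,2)])
  have angB: "(tri_angle A B C < pi/2 \<longleftrightarrow> inner (A-B) (C-B) > 0) \<and> (tri_angle A B C > pi/2 \<longleftrightarrow> inner (A-B) (C-B) < 0)"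
    unfolding tri_angle_def by (rule angle_sign[OF nz(3,4)])
  have angC: "(tri_angle A C B < pi/2 \<longleftrightarrow> inner (A-C) (B-C) > 0) \<and> (tri_angle A C B > pi/2 \<longleftrightarrow> inner (A-C) (B-C) < 0)"
    unfolding tri_angle_def by (rule angle_sign[OF nz(5,6)])
  have ab: "a > 0" "b > 0" using cc unfolding central_conic_def by auto
  show ?thesis
  proof (cases ell)
    case True
    hence "k > 0" unfolding k_def kap_def using ab by simp
    thus ?thesis using S angA angB angC True unfolding acute_triangle_def obtuse_triangle_def by auto
  next
    case False
    hence "k < 0" unfolding k_def kap_def using ab by simp
    thus ?thesis using S angA angB angC False unfolding acute_triangle_def obtuse_triangle_def by auto
  qed
qed

end
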